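(* Let $\beta>0$, $\alpha>2$, $N_o>0$, and $\eta(d)=\frac{1}{(1+d)^\alpha}$. (a) If $C,D>0$ satisfy $\dfrac{1+C}{C(2+D)}<\dfrac{1}{\tau\beta^{1/\alpha}}$, where $\tau=2\Big(\sum_{k=1}^\infty\frac{6}{k^{\alpha-1}}+\sum_{k=1}^\infty\frac{3}{k^\alpha}\Big)^{1/\alpha}$, then $(C,D)$ ensures SINR$_\beta$. (b) For any $C>0$ there exists $D>0$, depending on $\alpha,\beta,C$, such that $(C,D)$ ensures SINR$_\beta$. (c) There exists $D>0$, depending on $\alpha$ and $\beta$, such that $(C,D)$ ensures SINR$_\beta$ for all sufficiently large $C$.
   Context: $\mathrm{SINR}(t,r,T,P,N_o,\eta)=\dfrac{P\eta(\|t-r\|)}{N_o+\sum_{t'\in T}P\eta(\|t'-r\|)}$ for $t,r\in\mathbb{R}^2$, $T$ a finite subset of $\mathbb{R}^2$, $P>0$. $(t,r,T)$ satisfies DC$(C,D)$ if $\|t-r\|\le C$ and $\|t'-t''\|\ge C(2+D)$ for all distinct $t',t''\in T\cup\{t\}$. The pair $(C,D)$ ensures SINR$_\beta$ (given $N_o$ and $\eta$) if there exists $P>0$ such that every triple $(t,r,T)$ satisfying DC$(C,D)$ has $\mathrm{SINR}(t,r,T,P,N_o,\eta)\ge\beta$. *)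

theory Defs
  imports "HOL-Analysis.Analysis"
begin

definition SINR :: "real^2 \<Rightarrow> real^2 \<Rightarrow> (real^2) set \<Rightarrow> real \<Rightarrow> real \<Rightarrow> (real \<Rightarrow> real) \<Rightarrow> real" where
  "SINR t r T P No \<eta> = (P * \<eta> (norm (t - r))) / (No + (\<Sum>t'\<in>T. P * \<eta> (norm (t' - r))))"

definition DC :: "real \<Rightarrow> real \<Rightarrow> real^2 \<Rightarrow> real^2 \<Rightarrow> (real^2) set \<Rightarrow> bool" where
  "DC C D t r T \<longleftrightarrow> norm (t - r) \<le> C \<and>
     (\<forall>t'\<in>T \<union> {t}. \<forall>t''\<in>T \<union> {t}. t' \<noteq> t'' \<longrightarrow> norm (t' - t'') \<ge> C * (2 + D))"

definition ensures_SINR :: "real \<Rightarrow> real \<Rightarrow> (real \<Rightarrow> real) \<Rightarrow> real \<Rightarrow> real \<Rightarrow> bool" where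
  "ensures_SINR \<beta> No \<eta> C D \<longleftrightarrow> (\<exists>P>0. \<forall>t r T. finite T \<and> t \<notin> T \<and> DC C D t r T \<longrightarrow>
     SINR t r T P No \<eta> \<ge> \<beta>)"

end

theory Submission
  imports Defs
begin

lemma packing:
  fixes S :: "(real^2) set" and r :: "real^2" and s R1 R2 :: real
  assumes fin: "finite S" and s: "s > 0" and R1: "R1 \<ge> 0" and R12: "R1 \<le> R2"
    and sep: "\<And>x y. x \<in> S \<Longrightarrow> y \<in> S \<Longrightarrow> x \<noteq> y \<Longrightarrow> dist x y \<ge> 2 * s"
    and lo: "\<And>x. x \<in> S \<Longrightarrow> R1 + s \<le> dist x r"
    and hi: "\<And>x. x \<in> S \<Longrightarrow> dist x r + s \<le> R2"
  shows "real (card S) * s^2 \<le> R2^2 - R1^2"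
proof -
  define V where "V = unit_ball_vol (real DIM(real^2))"
  have V: "V > 0" unfolding V_def by simp
  define U where "U = (\<Union>x\<in>S. ball x s)"
  have mU: "measure lborel U = (\<Sum>x\<in>S. measure lborel (ball x s))"
    unfolding U_def
  proof (rule measure_UNION'[OF fin])
    fix x assume "x \<in> S"
    show "ball x s \<in> fmeasurable lborel"
      by (simp add: fmeasurable_def emeasure_ball[OF less_imp_le[OF s]])
  next
    show "pairwise (\<lambda>i j. disjnt (ball i s) (ball j s)) S"
      unfolding pairwise_def disjnt_def
    proof (intro ballI impI equalityI subsetI)
      fix x y z assume xy: "x \<in> S" "y \<in> S" "x \<noteq> y" and z: "z \<in> ball x s \<inter> ball y s"
      have "dist x y \<le> dist x z + dist z y" by (rule dist_triangle)
      with z sep[OF xy] show "z \<in> {}" by (auto simp: dist_commute)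
    qed auto
  qed
  also have "\<dots> = real (card S) * (V * s^2)"
    using content_ball[of s, where 'a="real^2"] s by (simp add: V_def)
  finally have mU': "measure lborel U = real (card S) * (V * s^2)" .
  have disj: "U \<inter> cball r R1 = {}"
  proof (rule ccontr)
    assume "U \<inter> cball r R1 \<noteq> {}"
    then obtain x z where x: "x \<in> S" and z: "dist x z < s" "dist r z \<le> R1"
      unfolding U_def by auto
    have "dist x r \<le> dist x z + dist z r" by (rule dist_triangle)
    with z lo[OF x] show False by (auto simp: dist_commute)
  qed
  have sub: "U \<union> cball r R1 \<subseteq> cball r R2"
  proof
    fix z assume "z \<in> U \<union> cball r R1"
    then show "z \<in> cball r R2"
    proof
      assume "z \<in> U"
      then obtain x where x: "x \<in> S" and z: "dist x z < s" unfolding U_def by auto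
      have "dist r z \<le> dist r x + dist x z" by (rule dist_triangle)
      with z hi[OF x] show ?thesis by (auto simp: dist_commute)
    next
      assume "z \<in> cball r R1"
      with R12 show ?thesis by auto
    qed
  qed
  have fU: "U \<in> fmeasurable lborel"
    unfolding U_def by (intro fmeasurable.finite_UN fin) (simp add: fmeasurable_def emeasure_ball[OF less_imp_le[OF s]])
  have "measure lborel (U \<union> cball r R1) = measure lborel U + measure lborel (cball r R1)"
    using disj fU by (intro measure_Union) (auto simp: fmeasurable_def emeasure_cball[OF R1])
  also have "\<dots> = real (card S) * (V * s^2) + V * R1^2"
    using mU' content_cball[OF R1, where 'a="real^2"] by (simp add: V_def)
  finally have eq: "measure lborel (U \<union> cball r R1) = real (card S) * (V * s^2) + V * R1^2" .
  have "cball r R2 \<in> fmeasurable lborel"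
    using R1 R12 by (simp add: fmeasurable_def emeasure_cball)
  then have "measure lborel (U \<union> cball r R1) \<le> measure lborel (cball r R2)"
    using sub fU by (intro measure_mono_fmeasurable) auto
  with eq have "real (card S) * (V * s^2) + V * R1^2 \<le> measure lborel (cball r R2)" by simp
  also have "\<dots> = V * R2^2"
    using content_cball[of R2 r] R1 R12 by (simp add: V_def)
  finally have "V * (real (card S) * s^2) \<le> V * (R2^2 - R1^2)" by (simp add: algebra_simps)
  with V show ?thesis by simp
qed
lemma summable_Suc_powr:
  fixes p :: real assumes "p > 1"
  shows "summable (\<lambda>n. c / real (Suc n) powr p)"
proof -
  have "summable (\<lambda>n. real n powr (-p))" using assms by (simp add: summable_real_powr_iff)
  then have "summable (\<lambda>n. real (Suc n) powr (-p))" by (subst summable_Suc_iff)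
  then have "summable (\<lambda>n. c * real (Suc n) powr (-p))" by (rule summable_mult)
  then show ?thesis by (simp add: powr_minus divide_inverse)
qed

lemma sum_bound:
  fixes S :: "(real^2) set" and r :: "real^2" and s \<alpha> :: real
  assumes fin: "finite S" and s: "s > 0" and a: "\<alpha> > 2"
    and sep: "\<And>x y. x \<in> S \<Longrightarrow> y \<in> S \<Longrightarrow> x \<noteq> y \<Longrightarrow> dist x y \<ge> 2 * s"
    and far: "\<And>x. x \<in> S \<Longrightarrow> s \<le> dist x r"
  shows "(\<Sum>x\<in>S. (s / dist x r) powr \<alpha>) \<le>
    (\<Sum>k. 6 / real (Suc k) powr (\<alpha> - 1)) + (\<Sum>k. 3 / real (Suc k) powr \<alpha>)"
proof -
  define g where "g x = nat \<lfloor>dist x r / s\<rfloor> - 1" for x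
  define h where "h n = 1 / real (Suc n) powr \<alpha>" for n
  define F where "F n = 6 / real (Suc n) powr (\<alpha> - 1) + 3 / real (Suc n) powr \<alpha>" for n
  have gfl: "real (Suc (g x)) = of_int \<lfloor>dist x r / s\<rfloor>" if "x \<in> S" for x
  proof -
    have "1 \<le> dist x r / s" using far[OF that] s by simp
    then have "1 \<le> \<lfloor>dist x r / s\<rfloor>" by linarith
    then show ?thesis unfolding g_def by (simp add: of_nat_diff)
  qed
  have gl: "real (Suc (g x)) * s \<le> dist x r" and gh: "dist x r < (real (Suc (g x)) + 1) * s"
    if "x \<in> S" for x
  proof -
    have 1: "of_int \<lfloor>dist x r / s\<rfloor> \<le> dist x r / s" and 2: "dist x r / s < of_int \<lfloor>dist x r / s\<rfloor> + 1"
      by linarith+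
    have "of_int \<lfloor>dist x r / s\<rfloor> * s \<le> dist x r / s * s"
      using 1 s by (intro mult_right_mono) auto
    then show "real (Suc (g x)) * s \<le> dist x r"
      unfolding gfl[OF that] using s by simp
    from 2 show "dist x r < (real (Suc (g x)) + 1) * s"
      unfolding gfl[OF that] using s by (simp add: field_simps)
  qed
  have step1: "(s / dist x r) powr \<alpha> \<le> h (g x)" if x: "x \<in> S" for x
  proof -
    have dpos: "dist x r > 0" using far[OF x] s by linarith
    have "s / dist x r \<le> 1 / real (Suc (g x))"
      using gl[OF x] dpos s by (simp add: field_simps)
    then have "(s / dist x r) powr \<alpha> \<le> (1 / real (Suc (g x))) powr \<alpha>"
      using s dpos a by (intro powr_mono2) auto
    then show ?thesis by (simp add: h_def powr_divide)
  qed
  have cardb: "real (card {x \<in> S. g x = n}) \<le> 6 * real (Suc n) + 3" for n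
  proof -
    have "real (card {x \<in> S. g x = n}) * s^2 \<le> ((real n + 3) * s)^2 - (real n * s)^2"
    proof (rule packing)
      show "finite {x \<in> S. g x = n}" using fin by simp
    next
      fix x assume "x \<in> {x \<in> S. g x = n}"
      then have x: "x \<in> S" "g x = n" by auto
      show "real n * s + s \<le> dist x r" using gl[OF x(1)] x(2) by (simp add: algebra_simps)
      show "dist x r + s \<le> (real n + 3) * s" using gh[OF x(1)] x(2) by (simp add: algebra_simps)
    qed (use s sep in \<open>auto\<close>)
    also have "\<dots> = (6 * real (Suc n) + 3) * s^2" by (simp add: power2_eq_square algebra_simps)
    finally show ?thesis using s by simp
  qed
  have "(\<Sum>x\<in>S. (s / dist x r) powr \<alpha>) \<le> (\<Sum>x\<in>S. h (g x))"
    by (intro sum_mono step1)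
  also have "\<dots> = (\<Sum>n\<in>g ` S. \<Sum>x\<in>{x \<in> S. g x = n}. h (g x))"
    using fin by (intro sum.group[symmetric]) auto
  also have "\<dots> = (\<Sum>n\<in>g ` S. real (card {x \<in> S. g x = n}) * h n)"
    by (intro sum.cong refl) auto
  also have "\<dots> \<le> (\<Sum>n\<in>g ` S. F n)"
  proof (intro sum_mono)
    fix n
    have hn: "h n \<ge> 0" by (simp add: h_def)
    have "real (card {x \<in> S. g x = n}) * h n \<le> (6 * real (Suc n) + 3) * h n"
      by (intro mult_right_mono cardb hn)
    also have "\<dots> = F n"
    proof -
      have pos: "real (Suc n) > 0" by simp
      have "real (Suc n) / real (Suc n) powr \<alpha> = 1 / real (Suc n) powr (\<alpha> - 1)"
        using pos by (simp add: powr_diff)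
      moreover have "(6 * real (Suc n) + 3) * (1 / real (Suc n) powr \<alpha>)
          = 6 * (real (Suc n) / real (Suc n) powr \<alpha>) + 3 / real (Suc n) powr \<alpha>"
        by (simp add: add_divide_distrib distrib_right)
      ultimately show ?thesis unfolding F_def h_def by simp
    qed
    finally show "real (card {x \<in> S. g x = n}) * h n \<le> F n" .
  qed
  also have "\<dots> \<le> suminf F"
  proof (rule sum_le_suminf)
    show "summable F" unfolding F_def using a by (intro summable_add summable_Suc_powr) auto
  qed (use fin in \<open>auto simp: F_def\<close>)
  also have "suminf F = (\<Sum>k. 6 / real (Suc k) powr (\<alpha> - 1)) + (\<Sum>k. 3 / real (Suc k) powr \<alpha>)"
    unfolding F_def using a by (intro suminf_add[symmetric] summable_Suc_powr) auto
  finally show ?thesis .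
qed

lemma partA:
  fixes \<alpha> \<beta> No C D Z :: real
  assumes b: "\<beta> > 0" and a: "\<alpha> > 2" and No: "No > 0" and C: "C > 0" and D: "D > 0"
    and Zdef: "Z = (\<Sum>k. 6 / real (Suc k) powr (\<alpha> - 1)) + (\<Sum>k. 3 / real (Suc k) powr \<alpha>)"
    and Zpos: "Z > 0"
    and cond: "(1 + C) / (C * (2 + D)) < 1 / ((2 * Z powr (1 / \<alpha>)) * \<beta> powr (1 / \<alpha>))"
  shows "ensures_SINR \<beta> No (\<lambda>d::real. 1 / (1 + d) powr \<alpha>) C D"
proof -
  define L where "L = C * (2 + D)"
  define s where "s = L / 2"
  define K where "K = (2 * Z powr (1 / \<alpha>)) * \<beta> powr (1 / \<alpha>)"
  define q where "q = K / L"
  have Lpos: "L > 0" using C D by (simp add: L_def)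
  have spos: "s > 0" using Lpos by (simp add: s_def)
  have Kpos: "K > 0" using Zpos b by (simp add: K_def)
  have CL: "C \<le> s" using C D by (simp add: s_def L_def field_simps)
  have "(1 + C) * K < L"
    using cond Kpos Lpos C unfolding K_def[symmetric] L_def[symmetric] by (simp add: field_simps)
  then have qlt: "q < 1 / (1 + C)" using C Lpos Kpos by (simp add: q_def field_simps)
  have q0: "q \<ge> 0" using Kpos Lpos by (simp add: q_def)
  define \<epsilon> where "\<epsilon> = (1 / (1 + C)) powr \<alpha> - q powr \<alpha>"
  have eps: "\<epsilon> > 0" unfolding \<epsilon>_def using qlt q0 a by (simp add: powr_less_mono2)
  have qa: "q powr \<alpha> = \<beta> * (Z / s powr \<alpha>)"
  proof -
    have "q powr \<alpha> = K powr \<alpha> / L powr \<alpha>" using Kpos Lpos by (simp add: q_def powr_divide)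
    also have "K powr \<alpha> = 2 powr \<alpha> * Z * \<beta>"
      using Zpos b a by (simp add: K_def powr_mult powr_powr)
    also have "L powr \<alpha> = 2 powr \<alpha> * s powr \<alpha>"
      using Lpos by (simp add: s_def powr_mult[symmetric])
    finally show ?thesis by (simp add: field_simps)
  qed
  define P where "P = \<beta> * No / \<epsilon>"
  have Ppos: "P > 0" using b No eps by (simp add: P_def)
  show ?thesis unfolding ensures_SINR_def
  proof (intro exI[of _ P] conjI allI impI Ppos)
    fix t r :: "real^2" and T
    assume H: "finite T \<and> t \<notin> T \<and> DC C D t r T"
    then have fin: "finite T" and tT: "t \<notin> T" and d0: "norm (t - r) \<le> C"
      and sepall: "\<And>x y. x \<in> T \<union> {t} \<Longrightarrow> y \<in> T \<union> {t} \<Longrightarrow> x \<noteq> y \<Longrightarrow> norm (x - y) \<ge> L"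
      unfolding DC_def L_def by auto
    define ST where "ST = (\<Sum>t'\<in>T. 1 / (1 + norm (t' - r)) powr \<alpha>)"
    define e0 where "e0 = 1 / (1 + norm (t - r)) powr \<alpha>"
    have far: "s \<le> dist x r" if x: "x \<in> T" for x
    proof -
      have "L \<le> norm (x - t)" using sepall[of x t] x tT by auto
      moreover have "norm (x - t) \<le> norm (x - r) + norm (t - r)"
        by (metis dist_norm dist_triangle2)
      ultimately show ?thesis using d0 CL by (simp add: dist_norm s_def)
    qed
    have sb: "(\<Sum>x\<in>T. (s / dist x r) powr \<alpha>) \<le> Z"
      unfolding Zdef
    proof (rule sum_bound[OF fin spos a])
      fix x y assume "x \<in> T" "y \<in> T" "x \<noteq> y"
      then show "2 * s \<le> dist x y" using sepall[of x y] by (simp add: s_def dist_norm)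
    qed (rule far)
    have "ST \<le> (\<Sum>x\<in>T. (s / dist x r) powr \<alpha> / s powr \<alpha>)"
      unfolding ST_def
    proof (rule sum_mono)
      fix x assume x: "x \<in> T"
      have dpos: "dist x r > 0" using far[OF x] spos by linarith
      have "1 / (1 + norm (x - r)) powr \<alpha> \<le> 1 / (dist x r) powr \<alpha>"
        using dpos a by (intro divide_left_mono powr_mono2) (auto simp: dist_norm intro!: mult_pos_pos add_pos_nonneg, smt (verit) norm_ge_zero)
      also have "\<dots> = (s / dist x r) powr \<alpha> / s powr \<alpha>"
        using dpos spos by (simp add: powr_divide)
      finally show "1 / (1 + norm (x - r)) powr \<alpha> \<le> (s / dist x r) powr \<alpha> / s powr \<alpha>" .
    qed
    also have "\<dots> = (\<Sum>x\<in>T. (s / dist x r) powr \<alpha>) / s powr \<alpha>"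
      by (simp add: sum_divide_distrib)
    also have "\<dots> \<le> Z / s powr \<alpha>"
      using sb spos by (simp add: divide_right_mono)
    finally have STb: "\<beta> * ST \<le> q powr \<alpha>" using qa b by (simp add: mult_left_mono times_divide_eq_right[symmetric] del: times_divide_eq_right)
    have e0b: "e0 \<ge> (1 / (1 + C)) powr \<alpha>"
    proof -
      have n1: "1 + norm (t - r) > 0" by (smt (verit) norm_ge_zero)
      have "1 / (1 + C) powr \<alpha> \<le> e0"
        unfolding e0_def using d0 a C n1 by (intro divide_left_mono powr_mono2) (auto intro!: mult_pos_pos)
      then show ?thesis using C by (simp add: powr_divide)
    qed
    have ST0: "ST \<ge> 0" unfolding ST_def by (intro sum_nonneg) auto
    have key: "\<beta> * No \<le> P * (e0 - \<beta> * ST)"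
    proof -
      have "\<epsilon> \<le> e0 - \<beta> * ST" using STb e0b by (simp add: \<epsilon>_def)
      then have "P * \<epsilon> \<le> P * (e0 - \<beta> * ST)" using Ppos by simp
      moreover have "P * \<epsilon> = \<beta> * No" using eps by (simp add: P_def)
      ultimately show ?thesis by simp
    qed
    have "SINR t r T P No (\<lambda>d. 1 / (1 + d) powr \<alpha>) = P * e0 / (No + P * ST)"
      unfolding SINR_def e0_def ST_def by (simp add: sum_distrib_left)
    also have "\<beta> \<le> P * e0 / (No + P * ST)"
    proof -
      have den: "No + P * ST > 0" using No Ppos ST0 by (simp add: add_pos_nonneg)
      have "\<beta> * (No + P * ST) \<le> P * e0" using key by (simp add: algebra_simps)
      then show ?thesis using den by (simp add: pos_le_divide_eq)
    qed
    finally show "\<beta> \<le> SINR t r T P No (\<lambda>d. 1 / (1 + d) powr \<alpha>) " .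
  qed
qed


lemma div_helper:
  fixes a b K :: real
  assumes "a * K < b" "b > 0" "K > 0"
  shows "a / b < 1 / K"
proof -
  have "a / b = (a * K) / (b * K)" using assms by simp
  also have "\<dots> < b / (b * K)" using assms by (intro divide_strict_right_mono) auto
  also have "\<dots> = 1 / K" using assms by simp
  finally show ?thesis .
qed

theorem lemma2:
  fixes \<alpha> \<beta> No :: real
  assumes "\<beta> > 0" "\<alpha> > 2" "No > 0"
  defines "\<eta> \<equiv> (\<lambda>d::real. 1 / (1 + d) powr \<alpha>)"
  defines "\<tau> \<equiv> 2 * ((\<Sum>k. 6 / real (Suc k) powr (\<alpha> - 1)) + (\<Sum>k. 3 / real (Suc k) powr \<alpha>)) powr (1 / \<alpha>)"
  shows "(\<forall>C D. C > 0 \<longrightarrow> D > 0 \<longrightarrow> (1 + C) / (C * (2 + D)) < 1 / (\<tau> * \<beta> powr (1 / \<alpha>))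
            \<longrightarrow> ensures_SINR \<beta> No \<eta> C D)
       \<and> (\<forall>C>0. \<exists>D>0. ensures_SINR \<beta> No \<eta> C D)
       \<and> (\<exists>D>0. \<exists>C0. \<forall>C\<ge>C0. ensures_SINR \<beta> No \<eta> C D)"
proof -
  define Z where "Z = (\<Sum>k. 6 / real (Suc k) powr (\<alpha> - 1)) + (\<Sum>k. 3 / real (Suc k) powr \<alpha>)"
  have "0 < (\<Sum>k. 6 / real (Suc k) powr (\<alpha> - 1))"
    using assms(2) by (intro suminf_pos summable_Suc_powr) auto
  moreover have "0 < (\<Sum>k. 3 / real (Suc k) powr \<alpha>)"
    using assms(2) by (intro suminf_pos summable_Suc_powr) auto
  ultimately have Zpos: "Z > 0" by (simp add: Z_def)
  have teq: "\<tau> = 2 * Z powr (1 / \<alpha>)" by (simp add: \<tau>_def Z_def)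
  have A: "\<forall>C D. C > 0 \<longrightarrow> D > 0 \<longrightarrow> (1 + C) / (C * (2 + D)) < 1 / (\<tau> * \<beta> powr (1 / \<alpha>))
            \<longrightarrow> ensures_SINR \<beta> No \<eta> C D"
    unfolding teq \<eta>_def using partA[OF assms(1,2,3) _ _ Z_def Zpos] by blast
  define K where "K = \<tau> * \<beta> powr (1 / \<alpha>)"
  have Kpos: "K > 0" using Zpos assms(1) by (simp add: K_def teq)
  have B: "\<forall>C>0. \<exists>D>0. ensures_SINR \<beta> No \<eta> C D"
  proof (intro allI impI)
    fix C :: real assume C: "C > 0"
    define D where "D = 2 * (1 + C) * K / C"
    have D: "D > 0" using C Kpos by (simp add: D_def)
    have "C * (2 + D) = 2 * C + 2 * (1 + C) * K" using C by (simp add: D_def field_simps)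
    then have "(1 + C) * K < C * (2 + D)" using C Kpos by (simp add: field_simps add_pos_pos)
    then have "(1 + C) / (C * (2 + D)) < 1 / K" using C D Kpos by (intro div_helper) auto
    then show "\<exists>D>0. ensures_SINR \<beta> No \<eta> C D"
      using A C D unfolding K_def by blast
  qed
  have Cc: "\<exists>D>0. \<exists>C0. \<forall>C\<ge>C0. ensures_SINR \<beta> No \<eta> C D"
  proof (rule exI[of _ "2 * K"], rule conjI)
    show "2 * K > 0" using Kpos by simp
    show "\<exists>C0. \<forall>C\<ge>C0. ensures_SINR \<beta> No \<eta> C (2 * K)"
    proof (rule exI[of _ 1], intro allI impI)
    fix C :: real assume C: "C \<ge> 1"
    have "(1 + C) * K \<le> 2 * C * K" using C Kpos by (intro mult_right_mono) auto
    also have "\<dots> < C * (2 + 2 * K)" using C by (simp add: algebra_simps)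
    finally have "(1 + C) / (C * (2 + 2 * K)) < 1 / K" using C Kpos by (intro div_helper) auto
    then show "ensures_SINR \<beta> No \<eta> C (2 * K)"
      using A C Kpos unfolding K_def by auto
    qed
  qed
  show ?thesis using A B Cc by blast
qed

end
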